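(* Every finite projective plane (of any order $n\ge 2$) admits a legitimate coloring with $42$ colors.
   Context: For a coloring $f:P\to\{1,\dots,\mathsf d\}$ of the points of a projective plane $P_n=(P,L)$, the type of a line $\ell$ is $(|\ell\cap f^{-1}(1)|,\dots,|\ell\cap f^{-1}(\mathsf d)|)$. The coloring is legitimate if all lines have pairwise distinct types. *)

theory Defs
  imports Main
begin

definition projective_plane :: "'a set \<Rightarrow> 'a set set \<Rightarrow> bool" where
  "projective_plane P L \<longleftrightarrow>
     (\<forall>l\<in>L. l \<subseteq> P) \<and>
     (\<forall>p\<in>P. \<forall>q\<in>P. p \<noteq> q \<longrightarrow> (\<exists>!l. l \<in> L \<and> p \<in> l \<and> q \<in> l)) \<and>
     (\<forall>l\<in>L. \<forall>m\<in>L. l \<noteq> m \<longrightarrow> (\<exists>!p. p \<in> P \<and> p \<in> l \<and> p \<in> m)) \<and>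
     (\<exists>Q. Q \<subseteq> P \<and> card Q = 4 \<and>
        (\<forall>l\<in>L. card (Q \<inter> l) \<le> 2))"

definition pp_order :: "'a set set \<Rightarrow> nat" where
  "pp_order L = card (SOME l. l \<in> L) - 1"

definition line_type :: "nat \<Rightarrow> ('a \<Rightarrow> nat) \<Rightarrow> 'a set \<Rightarrow> nat list" where
  "line_type d f l = map (\<lambda>i. card (l \<inter> f -` {i})) [1..<d+1]"

definition legitimate_coloring :: "'a set \<Rightarrow> 'a set set \<Rightarrow> nat \<Rightarrow> ('a \<Rightarrow> nat) \<Rightarrow> bool" where
  "legitimate_coloring P L d f \<longleftrightarrow>
     (\<forall>p\<in>P. f p \<in> {1..d}) \<and> inj_on (line_type d f) L"

end

theory Submission imports Defs "HOL-Library.FuncSet" begin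

lemma bal_card:
  assumes "finite U" "finite V" "U \<inter> V = {}" "card U = k" "card (S\<inter>U) = card (S\<inter>V)"
  shows "(S\<inter>V) \<union> (U-S) \<subseteq> U \<union> V \<and> card ((S\<inter>V) \<union> (U-S)) = k"
proof -
  have "card ((S\<inter>V) \<union> (U-S)) = card (S\<inter>V) + card (U-S)"
    using assms by (intro card_Un_disjoint) auto
  also have "card (U - S) = card U - card (S \<inter> U)"
    using assms by (simp add: card_Diff_subset_Int Int_commute)
  also have "card (S\<inter>U) \<le> card U" using assms by (intro card_mono) auto
  ultimately show ?thesis using assms by auto
qed

lemma good_count:
  assumes fX: "finite X" and sub: "U \<subseteq> X" "V \<subseteq> X" "U' \<subseteq> X" "V' \<subseteq> X"
    and dis: "U \<inter> V = {}" "U \<inter> U' = {}" "U \<inter> V' = {}" "V \<inter> U' = {}" "V \<inter> V' = {}" "U' \<inter> V' = {}"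
    and cards: "card U = k" "card V = k" "card U' = k'" "card V' = k'"
  shows "card {S. S \<subseteq> X \<and> card (S\<inter>U) = card (S\<inter>V) \<and> card (S\<inter>U') = card (S\<inter>V')}
         \<le> ((2*k) choose k) * ((2*k') choose k') * 2^(card X - 2*k - 2*k')"
proof -
  define W where "W = U \<union> V \<union> U' \<union> V'"
  define G where "G = {S. S \<subseteq> X \<and> card (S\<inter>U) = card (S\<inter>V) \<and> card (S\<inter>U') = card (S\<inter>V')}"
  define \<phi> where "\<phi> S = ((S\<inter>V) \<union> (U-S), (S\<inter>V') \<union> (U'-S), S - W)" for S
  define C where "C = {B. B \<subseteq> U \<union> V \<and> card B = k} \<times> {B. B \<subseteq> U' \<union> V' \<and> card B = k'} \<times> Pow (X - W)"
  have fin: "finite U" "finite V" "finite U'" "finite V'" using sub fX finite_subset by blast+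
  have "inj_on \<phi> G"
  proof (rule inj_onI)
    fix S T assume S: "S \<in> G" and T: "T \<in> G" and e: "\<phi> S = \<phi> T"
    have e1: "(S\<inter>V) \<union> (U-S) = (T\<inter>V) \<union> (U-T)" and e2: "(S\<inter>V') \<union> (U'-S) = (T\<inter>V') \<union> (U'-T)"
      and e3: "S - W = T - W" using e unfolding \<phi>_def by auto
    have "S \<inter> V = T \<inter> V" using e1 dis by blast
    moreover have "S \<inter> U = T \<inter> U" using e1 dis by blast
    moreover have "S \<inter> V' = T \<inter> V'" using e2 dis by blast
    moreover have "S \<inter> U' = T \<inter> U'" using e2 dis by blast
    ultimately show "S = T" using e3 unfolding W_def by blast
  qed
  moreover have "\<phi> ` G \<subseteq> C"
  proof
    fix x assume "x \<in> \<phi> ` G"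
    then obtain S where S: "S \<in> G" and x: "x = \<phi> S" by auto
    have "(S\<inter>V) \<union> (U-S) \<subseteq> U \<union> V \<and> card ((S\<inter>V) \<union> (U-S)) = k"
      using S fin dis cards by (intro bal_card) (auto simp: G_def)
    moreover have "(S\<inter>V') \<union> (U'-S) \<subseteq> U' \<union> V' \<and> card ((S\<inter>V') \<union> (U'-S)) = k'"
      using S fin dis cards by (intro bal_card) (auto simp: G_def)
    moreover have "S - W \<subseteq> X - W" using S by (auto simp: G_def)
    ultimately show "x \<in> C" unfolding x C_def \<phi>_def by auto
  qed
  moreover have "finite C" unfolding C_def using fin fX by auto
  ultimately have "card G \<le> card C" by (meson card_inj_on_le)
  moreover have "card C = ((2*k) choose k) * ((2*k') choose k') * 2^(card X - 2*k - 2*k')"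
  proof -
    have "card (U \<union> V) = 2*k" using fin dis cards by (simp add: card_Un_disjoint)
    moreover have "card (U' \<union> V') = 2*k'" using fin dis cards by (simp add: card_Un_disjoint)
    moreover have "card W = 2*k + 2*k'"
    proof -
      have "W = (U \<union> V) \<union> (U' \<union> V')" unfolding W_def by blast
      moreover have "(U \<union> V) \<inter> (U' \<union> V') = {}" using dis by blast
      ultimately have "card W = card (U \<union> V) + card (U' \<union> V')" using fin by (simp add: card_Un_disjoint)
      then show ?thesis using \<open>card (U \<union> V) = 2*k\<close> \<open>card (U' \<union> V') = 2*k'\<close> by simp
    qed
    moreover have "card (X - W) = card X - card W" using sub fX unfolding W_def
      by (intro card_Diff_subset) (auto intro: finite_subset)
    ultimately show ?thesis unfolding C_def using fin fX
      by (simp add: card_cartesian_product n_subsets card_Pow)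
  qed
  ultimately show ?thesis unfolding G_def by simp
qed

lemma cb_rec: "Suc k * ((2*Suc k) choose Suc k) = 2*(2*k+1) * ((2*k) choose k)"
proof -
  have b: "Suc (2*k) * (2*k choose k) = (Suc (2*k) choose Suc k) * Suc k"
    by (rule Suc_times_binomial_eq)
  have c: "(Suc (Suc (2*k)) choose Suc k) = (Suc (2*k) choose k) + (Suc (2*k) choose Suc k)" by simp
  have d: "(Suc (2*k) choose k) = (Suc (2*k) choose Suc k)"
    using binomial_symmetric[of k "Suc (2*k)"] by (simp add: Suc_diff_le)
  have "2*Suc k = Suc (Suc (2*k))" by simp
  hence e: "((2*Suc k) choose Suc k) = 2*(Suc (2*k) choose Suc k)" using c d by simp
  show ?thesis using b e by (simp add: algebra_simps)  
qed
lemma aux_ineq: "(x::nat)^2 * (y^2 * (3*Suc k+1)) = (2*(2*k+1) * z)^2 * (3*k+4) \<Longrightarrow> x = Suc k \<Longrightarrow>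
   z^2 * (3*k+1) \<le> 16^k \<Longrightarrow> y^2 * (3*Suc k+1) \<le> 16^Suc k"
proof -
  assume h: "x^2 * (y^2 * (3*Suc k+1)) = (2*(2*k+1) * z)^2 * (3*k+4)" and x: "x = Suc k" and ih: "z^2 * (3*k+1) \<le> 16^k"
  have "(2*(2*k+1) * z)^2 * (3*k+4) = z^2 * (4*(2*k+1)^2*(3*k+4))" by (simp add: power2_eq_square algebra_simps)
  also have "\<dots> \<le> z^2 * (16*(Suc k)^2*(3*k+1))"
    by (rule mult_left_mono) (simp_all add: power2_eq_square algebra_simps)
  also have "\<dots> = (Suc k)^2 * (16 * (z^2 * (3*k+1)))" by (simp add: algebra_simps)
  also have "\<dots> \<le> (Suc k)^2 * (16 * 16^k)" using ih by simp
  finally have "(Suc k)^2 * (y^2 * (3*Suc k+1)) \<le> (Suc k)^2 * 16^Suc k" using h x by simp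
  then show ?thesis by simp
qed
lemma cb_bound: "((2*k) choose k)^2 * (3*k+1) \<le> 16^k"
proof (induction k)
  case 0 then show ?case by simp
next
  case (Suc k)
  have r: "Suc k * ((2*Suc k) choose Suc k) = 2*(2*k+1) * ((2*k) choose k)" by (rule cb_rec)
  show ?case
    apply (rule aux_ineq[of "Suc k" _ _ "(2*k) choose k"])
    apply (subst r[symmetric]) apply (simp only: power_mult_distrib) apply simp
    apply simp by (rule Suc.IH)
qed

lemma sq16: "((16::nat)^n)^2 = 256^n" by (simp add: power2_eq_square power_mult_distrib[symmetric])
lemma sqC: "((C::nat)^2 * y)^2 = C^4 * y^2" by (simp add: power_mult_distrib flip: power_mult)

lemma p256: "((2::nat)^(2*n))^4 = 256^n"
proof -
  have "((2::nat)^(2*n))^4 = 2^(8*n)" by (simp flip: power_mult)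
  also have "\<dots> = (2^8)^n" by (simp add: power_mult)
  finally show ?thesis by simp
qed

lemma pow_split: "k \<le> x \<Longrightarrow> (2::nat)^x = 2^k * 2^(x-k)"
  by (metis le_add_diff_inverse power_add)

lemma num1:
  assumes "2*n \<le> x" "n \<ge> 1"
  shows "(((2*n) choose n) * ((2*0) choose 0) * 2^(x - 2*n - 2*0))^4 * (3*(n+1)^2) \<le> ((2::nat)^x)^4"
proof -
  define C where "C = (2*n) choose n"
  define E where "E = (2::nat)^(x - 2*n)"
  have c: "C^2 * (3*n+1) \<le> 16^n" unfolding C_def by (rule cb_bound)
  have "(C^2 * (3*n+1))^2 \<le> (16^n)^2" using c by (rule power_mono) simp
  then have c4: "C^4 * (3*n+1)^2 \<le> 256^n" by (simp only: sq16 sqC)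
  have t: "3*(n+1)^2 \<le> (3*n+1)^2" using assms(2) by (simp add: power2_eq_square algebra_simps)
  have "(C * 1 * E)^4 * (3*(n+1)^2) = E^4 * (C^4 * (3*(n+1)^2))" by (simp add: power_mult_distrib algebra_simps)
  also have "\<dots> \<le> E^4 * (C^4 * (3*n+1)^2)" using t by (intro mult_left_mono) simp_all
  also have "\<dots> \<le> E^4 * 256^n" using c4 by (intro mult_left_mono) simp_all
  also have "\<dots> = (2^x)^4"
  proof -
    have "(2::nat)^x = 2^(2*n) * E" unfolding E_def using assms(1) by (rule pow_split)
    then have "((2::nat)^x)^4 = ((2::nat)^(2*n))^4 * E^4" by (simp add: power_mult_distrib)
    then show ?thesis by (simp add: p256)
  qed
  finally show ?thesis unfolding C_def E_def by simp
qed

lemma num_k_even: "(n::nat) = 2*q \<Longrightarrow> q = Suc r \<Longrightarrow> (k1 = q - 1 \<and> k2 = n+1-q) \<or> (k1 = q \<and> k2 = n - q) \<Longrightarrow> 3*n^2 \<le> 2*(3*k1+1)*(3*k2+1)"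
proof -
  assume a: "n = 2*q" "q = Suc r" and k: "(k1 = q - 1 \<and> k2 = n+1-q) \<or> (k1 = q \<and> k2 = n - q)"
  show ?thesis
  proof (cases "k1 = q - 1 \<and> k2 = n+1-q")
    case True then show ?thesis using a by (auto simp: power2_eq_square algebra_simps)
  next
    case False then have "k1 = q \<and> k2 = n - q" using k by blast
    then show ?thesis using a by (auto simp: power2_eq_square algebra_simps)
  qed
qed
lemma num_k_odd: "(n::nat) = 2*q+1 \<Longrightarrow> (k1 = q \<and> k2 = n-q) \<or> (k1 = q+1 \<and> k2 = n - (q+1)) \<Longrightarrow> 3*n^2 \<le> 2*(3*k1+1)*(3*k2+1)"
proof -
  assume a: "n = 2*q+1" and k: "(k1 = q \<and> k2 = n-q) \<or> (k1 = q+1 \<and> k2 = n - (q+1))"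
  show ?thesis
  proof (cases "k1 = q \<and> k2 = n-q")
    case True then show ?thesis using a by (auto simp: power2_eq_square algebra_simps)
  next
    case False then have "k1 = q+1 \<and> k2 = n - (q+1)" using k by blast
    then show ?thesis using a by (auto simp: power2_eq_square algebra_simps)
  qed
qed

lemma num_k:
  assumes n: "(n::nat) \<ge> 2" and k: "(k1 = (n+1) div 2 - 1 \<and> k2 = n+1 - (n+1) div 2) \<or> (k1 = (n+1) div 2 \<and> k2 = n - (n+1) div 2)"
  shows "3*n^2 \<le> 2*(3*k1+1)*(3*k2+1)" "k1 + k2 = n"
proof -
  have a1: "(n+1) div 2 \<ge> 1" "(n+1) div 2 \<le> n" using n by auto
  show "k1 + k2 = n" using k a1 by auto
  obtain q where q: "n = 2*q \<or> n = 2*q+1" by (metis dvd_mult_div_cancel odd_two_times_div_two_succ)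
  show "3*n^2 \<le> 2*(3*k1+1)*(3*k2+1)"
  proof (cases "n = 2*q")
    case True
    then have a: "(n+1) div 2 = q" by simp
    have "q \<noteq> 0" using True n by auto
    then obtain r where r: "q = Suc r" by (cases q) auto
    show ?thesis using num_k_even[OF True r] k a by simp
  next
    case False
    then have nq: "n = 2*q+1" using q by auto
    then have a: "(n+1) div 2 = q+1" by simp
    show ?thesis using num_k_odd[OF nq] k a nq by auto
  qed
qed

lemma num2:
  assumes n: "(n::nat) \<ge> 2" and k: "(k1 = (n+1) div 2 - 1 \<and> k2 = n+1 - (n+1) div 2) \<or> (k1 = (n+1) div 2 \<and> k2 = n - (n+1) div 2)"
    and x: "2*k1 + 2*k2 \<le> x"
  shows "(((2*k1) choose k1) * ((2*k2) choose k2) * 2^(x - 2*k1 - 2*k2))^4 * (2*n^4) \<le> ((2::nat)^x)^4"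
proof -
  have s: "k1 + k2 = n" and Q: "3*n^2 \<le> 2*(3*k1+1)*(3*k2+1)" using num_k[OF n k] by auto
  define C where "C = ((2*k1) choose k1) * ((2*k2) choose k2)"
  define E where "E = (2::nat)^(x - 2*k1 - 2*k2)"
  define q where "q = (3*k1+1)*(3*k2+1)"
  have c1: "((2*k1) choose k1)^2 * (3*k1+1) \<le> 16^k1" by (rule cb_bound)
  have c2: "((2*k2) choose k2)^2 * (3*k2+1) \<le> 16^k2" by (rule cb_bound)
  have "(((2*k1) choose k1)^2 * (3*k1+1)) * (((2*k2) choose k2)^2 * (3*k2+1)) \<le> 16^k1 * 16^k2"
    using c1 c2 by (rule mult_mono) simp_all
  then have "C^2 * q \<le> 16^n" unfolding C_def q_def using s by (simp add: power_add[symmetric] power_mult_distrib algebra_simps)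
  then have "(C^2 * q)^2 \<le> (16^n)^2" by (rule power_mono) simp
  then have c4: "C^4 * q^2 \<le> 256^n" by (simp only: sq16 sqC)
  have "(3*n^2)^2 \<le> (2*q)^2" using Q unfolding q_def by (intro power_mono) (simp_all add: algebra_simps)
  then have "9*n^4 \<le> 4*q^2" by (simp add: power_mult_distrib power_mult[symmetric])
  then have t: "2*n^4 \<le> q^2" by linarith
  have "(C * E)^4 * (2*n^4) = E^4 * (C^4 * (2*n^4))" by (simp add: power_mult_distrib algebra_simps)
  also have "\<dots> \<le> E^4 * (C^4 * q^2)" using t by (intro mult_left_mono) simp_all
  also have "\<dots> \<le> E^4 * 256^n" using c4 by (intro mult_left_mono) simp_all
  also have "\<dots> = (2^x)^4"
  proof -
    have "(2::nat)^x = 2^(2*n) * E" unfolding E_def using x s pow_split[of "2*n" x] by (simp add: algebra_simps)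
    then have "((2::nat)^x)^4 = ((2::nat)^(2*n))^4 * E^4" by (simp add: power_mult_distrib)
    then show ?thesis by (simp add: p256)
  qed
  finally show ?thesis unfolding C_def E_def by (simp add: mult.assoc)
qed


locale pplane =
  fixes P :: "'a set" and L :: "'a set set"
  assumes finP: "finite P" and pp: "projective_plane P L"
begin

lemmas ppd = pp[unfolded projective_plane_def]
lemmas ax1 = conjunct1[OF ppd]
lemmas ax2 = conjunct1[OF conjunct2[OF ppd]]
lemmas ax3 = conjunct1[OF conjunct2[OF conjunct2[OF ppd]]]
lemmas ax4 = conjunct2[OF conjunct2[OF conjunct2[OF ppd]]]

lemma sub: "l \<in> L \<Longrightarrow> l \<subseteq> P"
  using ax1 by blast

lemma finl: "l \<in> L \<Longrightarrow> finite l"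
  using sub finP finite_subset by blast

lemma finL: "finite L"
proof -
  have "L \<subseteq> Pow P" using sub by blast
  then show ?thesis using finP finite_subset by blast
qed

lemma join_ex: "p \<in> P \<Longrightarrow> q \<in> P \<Longrightarrow> p \<noteq> q \<Longrightarrow> \<exists>l\<in>L. p \<in> l \<and> q \<in> l"
proof -
  assume "p \<in> P" "q \<in> P" "p \<noteq> q"
  then have "\<exists>!l. l \<in> L \<and> p \<in> l \<and> q \<in> l" using ax2 by blast
  then show ?thesis by blast
qed

lemma join_uniq: "l \<in> L \<Longrightarrow> m \<in> L \<Longrightarrow> p \<in> l \<Longrightarrow> q \<in> l \<Longrightarrow> p \<in> m \<Longrightarrow> q \<in> m \<Longrightarrow> p \<noteq> q \<Longrightarrow> l = m"
proof -
  assume a: "l \<in> L" "m \<in> L" "p \<in> l" "q \<in> l" "p \<in> m" "q \<in> m" "p \<noteq> q"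
  have "p \<in> P" "q \<in> P" using a sub by auto
  then have "\<exists>!l. l \<in> L \<and> p \<in> l \<and> q \<in> l" using ax2 a by blast
  then show "l = m" using a by blast
qed

lemma meet_ex: "l \<in> L \<Longrightarrow> m \<in> L \<Longrightarrow> l \<noteq> m \<Longrightarrow> \<exists>x. x \<in> l \<and> x \<in> m"
proof -
  assume "l \<in> L" "m \<in> L" "l \<noteq> m"
  then have "\<exists>!x. x \<in> P \<and> x \<in> l \<and> x \<in> m" using ax3 by blast
  then show ?thesis by blast
qed

lemma meet_uniq: "l \<in> L \<Longrightarrow> m \<in> L \<Longrightarrow> l \<noteq> m \<Longrightarrow> x \<in> l \<Longrightarrow> x \<in> m \<Longrightarrow> y \<in> l \<Longrightarrow> y \<in> m \<Longrightarrow> x = y"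
  using join_uniq by blast

definition pencil :: "'a \<Rightarrow> 'a set set" where "pencil Z = {k \<in> L. Z \<in> k}"

lemma deg:
  assumes Z: "Z \<in> P" and l: "l \<in> L" and Zl: "Z \<notin> l"
  shows "card l = card (pencil Z)"
proof -
  define g where "g x = (SOME k. k \<in> L \<and> Z \<in> k \<and> x \<in> k)" for x
  have g: "g x \<in> L \<and> Z \<in> g x \<and> x \<in> g x" if "x \<in> l" for x
  proof -
    have "x \<in> P" "x \<noteq> Z" using that l sub Zl by auto
    then have "\<exists>k. k \<in> L \<and> Z \<in> k \<and> x \<in> k" using join_ex Z by blast
    then show ?thesis unfolding g_def by (rule someI_ex)
  qed
  have "bij_betw g l (pencil Z)"
  proof (rule bij_betwI')
    fix x y assume x: "x \<in> l" and y: "y \<in> l"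
    show "(g x = g y) = (x = y)"
    proof
      assume e: "g x = g y"
      have "g x \<noteq> l" using g[OF x] Zl by auto
      then show "x = y" using meet_uniq[of "g x" l x y] g[OF x] g[OF y] e x y l by auto
    qed simp
  next
    fix x assume "x \<in> l" then show "g x \<in> pencil Z" using g unfolding pencil_def by auto
  next
    fix k assume k: "k \<in> pencil Z"
    then have kL: "k \<in> L" and Zk: "Z \<in> k" unfolding pencil_def by auto
    have "k \<noteq> l" using Zk Zl by auto
    then obtain x where x: "x \<in> k" "x \<in> l" using meet_ex kL l by blast
    have "x \<noteq> Z" using x Zl by auto
    then have "g x = k" using join_uniq[of "g x" k Z x] g[OF x(2)] kL Zk x by auto
    then show "\<exists>x\<in>l. k = g x" using x by auto
  qed
  then show ?thesis by (rule bij_betw_same_card)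
qed

lemma all_same:
  obtains Z0 where "Z0 \<in> P" "\<forall>l\<in>L. card l = card (pencil Z0)" "L \<noteq> {}"
proof -
  obtain Q where Q: "Q \<subseteq> P" "card Q = 4" "\<forall>l\<in>L. card (Q \<inter> l) \<le> 2"
    using ax4 by blast
  have finQ: "finite Q" using Q(1) finP finite_subset by blast
  have eqdeg: "card (pencil q) = card (pencil q')" if q: "q \<in> Q" "q' \<in> Q" "q \<noteq> q'" for q q'
  proof -
    have "card (Q - {q, q'}) = 2" using q Q(2) finQ by (simp add: card_Diff_subset)
    then obtain r s where rs: "Q - {q,q'} = {r, s}" "r \<noteq> s" by (meson card_2_iff)
    have rQ: "r \<in> Q" "s \<in> Q" "r \<notin> {q,q'}" "s \<notin> {q,q'}" using rs(1) by blast+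
    have "r \<in> P" "s \<in> P" using rQ Q(1) by blast+
    then obtain l where l: "l \<in> L" "r \<in> l" "s \<in> l" using join_ex rs(2) by blast
    have notin: "x \<notin> l" if xq: "x \<in> {q, q'}" for x
    proof
      assume xl: "x \<in> l"
      have xQ: "x \<in> Q" using xq q by blast
      have "{x, r, s} \<subseteq> Q \<inter> l" using rQ xQ xl l by blast
      moreover have "card {x, r, s} = 3" using rs(2) rQ xq by auto
      moreover have "finite (Q \<inter> l)" using finQ by blast
      ultimately have "3 \<le> card (Q \<inter> l)" by (metis card_mono)
      moreover have "card (Q \<inter> l) \<le> 2" using Q(3) l(1) by blast
      ultimately show False by linarith
    qed
    have "card l = card (pencil q)" using deg[of q l] notin q Q(1) l by auto
    moreover have "card l = card (pencil q')" using deg[of q' l] notin q Q(1) l by auto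
    ultimately show ?thesis by simp
  qed
  have "Q \<noteq> {}" using Q(2) by auto
  then obtain Z0 where Z0: "Z0 \<in> Q" by blast
  have "\<forall>l\<in>L. card l = card (pencil Z0)"
  proof
    fix l assume l: "l \<in> L"
    have "\<not> Q \<subseteq> l"
    proof
      assume "Q \<subseteq> l" then have "Q \<inter> l = Q" by auto
      moreover have "card (Q \<inter> l) \<le> 2" using Q(3) l by blast
      ultimately show False using Q(2) by simp
    qed
    then obtain q where q: "q \<in> Q" "q \<notin> l" by auto
    have qP: "q \<in> P" using q(1) Q(1) by blast
    have "card l = card (pencil q)" by (rule deg[OF qP l q(2)])
    also have "\<dots> = card (pencil Z0)"
    proof (cases "q = Z0")
      case False then show ?thesis using eqdeg[OF q(1) Z0] by blast
    qed simp
    finally show "card l = card (pencil Z0)" .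
  qed
  moreover have "L \<noteq> {}"
  proof -
    have "card (Q - {Z0}) = 3" using Q(2) Z0 finQ by simp
    then have "Q - {Z0} \<noteq> {}" by (metis card.empty zero_neq_numeral)
    then obtain q where "q \<in> Q" "q \<noteq> Z0" by blast
    then show ?thesis using join_ex Q(1) Z0 by blast
  qed
  ultimately show ?thesis using that Z0 Q(1) by auto
qed

end

context pplane begin

definition R :: "'a \<Rightarrow> 'a set set \<Rightarrow> 'a set" where "R Z G = {x\<in>P. x \<noteq> Z \<and> (\<exists>c\<in>G. x \<in> c)}"

lemma pencil_through: "Z \<in> P \<Longrightarrow> x \<in> P \<Longrightarrow> x \<noteq> Z \<Longrightarrow> \<exists>c\<in>pencil Z. x \<in> c"
  using join_ex unfolding pencil_def by blast

lemma pencil_uniq: "c \<in> pencil Z \<Longrightarrow> c' \<in> pencil Z \<Longrightarrow> x \<in> c \<Longrightarrow> x \<in> c' \<Longrightarrow> x \<noteq> Z \<Longrightarrow> c = c'"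
  unfolding pencil_def using join_uniq[of c c' x Z] by auto

lemma R_sub: "R Z G \<subseteq> P - {Z}" unfolding R_def by auto

lemma R_compl: assumes "Z \<in> P" "G \<subseteq> pencil Z"
  shows "R Z (pencil Z - G) = {x\<in>P. x \<noteq> Z \<and> x \<notin> R Z G}"
proof
  show "R Z (pencil Z - G) \<subseteq> {x\<in>P. x \<noteq> Z \<and> x \<notin> R Z G}"
  proof
    fix x assume "x \<in> R Z (pencil Z - G)"
    then obtain c where x: "x \<in> P" "x \<noteq> Z" "c \<in> pencil Z" "c \<notin> G" "x \<in> c" unfolding R_def by blast
    have "x \<notin> R Z G"
    proof
      assume "x \<in> R Z G"
      then obtain c' where "c' \<in> G" "x \<in> c'" unfolding R_def by blast
      then have "c' = c" using pencil_uniq[of c' Z c x] x assms(2) by blast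
      then show False using x \<open>c' \<in> G\<close> by blast
    qed
    then show "x \<in> {x\<in>P. x \<noteq> Z \<and> x \<notin> R Z G}" using x by blast
  qed
next
  show "{x\<in>P. x \<noteq> Z \<and> x \<notin> R Z G} \<subseteq> R Z (pencil Z - G)"
  proof
    fix x assume x: "x \<in> {x\<in>P. x \<noteq> Z \<and> x \<notin> R Z G}"
    then obtain c where c: "c \<in> pencil Z" "x \<in> c" using pencil_through assms(1) by blast
    have "c \<notin> G" using x c unfolding R_def by blast
    then show "x \<in> R Z (pencil Z - G)" using x c unfolding R_def by blast
  qed
qed

lemma card_line_R:
  assumes Z: "Z \<in> P" and m: "m \<in> L" "Z \<notin> m" and G: "G \<subseteq> pencil Z"
  shows "card (m \<inter> R Z G) = card G"
proof -
  define g where "g c = (SOME x. x \<in> c \<and> x \<in> m)" for c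
  have g: "g c \<in> c \<and> g c \<in> m" if "c \<in> G" for c
  proof -
    have "c \<in> L" "Z \<in> c" using that G unfolding pencil_def by auto
    then have "c \<noteq> m" using m by auto
    then have "\<exists>x. x \<in> c \<and> x \<in> m" using meet_ex \<open>c \<in> L\<close> m by blast
    then show ?thesis unfolding g_def by (rule someI_ex)
  qed
  have "bij_betw g G (m \<inter> R Z G)"
  proof (rule bij_betwI')
    fix c c' assume c: "c \<in> G" and c': "c' \<in> G"
    show "(g c = g c') = (c = c')"
    proof
      assume e: "g c = g c'"
      have "g c \<noteq> Z" using g[OF c] m by auto
      then show "c = c'" using pencil_uniq[of c Z c' "g c"] g[OF c] g[OF c'] e c c' G by auto
    qed simp
  next
    fix c assume c: "c \<in> G"
    have "g c \<in> P" using g[OF c] sub m by blast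
    moreover have "g c \<noteq> Z" using g[OF c] m by auto
    ultimately show "g c \<in> m \<inter> R Z G" using g[OF c] c unfolding R_def by blast
  next
    fix x assume x: "x \<in> m \<inter> R Z G"
    then obtain c where c: "c \<in> G" "x \<in> c" unfolding R_def by blast
    have "c \<in> L" "Z \<in> c" using c G unfolding pencil_def by auto
    then have "c \<noteq> m" using m by auto
    then have "g c = x" using meet_uniq[of c m "g c" x] g[OF c(1)] c x \<open>c \<in> L\<close> m by blast
    then show "\<exists>c\<in>G. x = g c" using c by auto
  qed
  then show ?thesis by (simp add: bij_betw_same_card)
qed

lemma pencil_line_R:
  assumes "c \<in> pencil Z" "G \<subseteq> pencil Z"
  shows "c \<inter> R Z G = (if c \<in> G then c - {Z} else {})"
proof (cases "c \<in> G")
  case True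
  have "c \<subseteq> P" using assms(1) sub unfolding pencil_def by auto
  then show ?thesis using True unfolding R_def by auto
next
  case False
  have "c \<inter> R Z G = {}"
  proof (rule ccontr)
    assume "c \<inter> R Z G \<noteq> {}"
    then obtain x c' where "x \<in> c" "x \<noteq> Z" "c' \<in> G" "x \<in> c'" unfolding R_def by blast
    then have "c = c'" using pencil_uniq[of c Z c' x] assms by blast
    then show False using False \<open>c' \<in> G\<close> by blast
  qed
  then show ?thesis using False by simp
qed

end


lemma card_fib_sum:
  assumes "finite l" "finite C"
  shows "card (l \<inter> f -` C) = (\<Sum>i\<in>C. card (l \<inter> f -` {i}))"
proof -
  have "l \<inter> f -` C = (\<Union>i\<in>C. l \<inter> f -` {i})" by auto
  moreover have "card (\<Union>i\<in>C. l \<inter> f -` {i}) = (\<Sum>i\<in>C. card (l \<inter> f -` {i}))"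
    by (rule card_UN_disjoint) (use assms in auto)
  ultimately show ?thesis by simp
qed

lemma type_eq_C:
  assumes fl: "finite l" and fm: "finite m" and e: "line_type d f l = line_type d f m" and C: "C \<subseteq> {1..d}"
  shows "card (l \<inter> f -` C) = card (m \<inter> f -` C)"
proof -
  have pt: "card (l \<inter> f -` {i}) = card (m \<inter> f -` {i})" if i: "i \<in> {1..d}" for i
  proof -
    have il: "i - 1 < length [1..<d+1]" using i by auto
    have ii: "[1..<d+1] ! (i - 1) = i" using i by (simp add: nth_upt del: upt_Suc)
    have "line_type d f l ! (i-1) = line_type d f m ! (i-1)" using e by simp
    then show ?thesis unfolding line_type_def using il ii by (simp add: nth_map del: upt_Suc)
  qed
  have fC: "finite C" using C finite_subset by blast
  have "card (l \<inter> f -` C) = (\<Sum>i\<in>C. card (l \<inter> f -` {i}))" using fl fC by (rule card_fib_sum)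
  also have "\<dots> = (\<Sum>i\<in>C. card (m \<inter> f -` {i}))" using pt C by (intro sum.cong) auto
  also have "\<dots> = card (m \<inter> f -` C)" using fm fC by (rule card_fib_sum[symmetric])
  finally show ?thesis .
qed

definition col :: "(nat \<Rightarrow> 'a set) \<Rightarrow> 'a \<Rightarrow> nat" where
  "col S x = (if x \<in> S 0 then 1 else 0) + (if x \<in> S 1 then 2 else 0) + (if x \<in> S 2 then 4 else 0) + (if x \<in> S 3 then 8 else 0)"

lemma col_lt: "col S x < 16" unfolding col_def by auto

lemma col_bit: "j < 4 \<Longrightarrow> odd (col S x div 2^j) \<longleftrightarrow> x \<in> S j"
proof -
  assume j: "j < 4"
  then have "j = 0 \<or> j = 1 \<or> j = 2 \<or> j = 3" by auto
  then show ?thesis unfolding col_def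
    by (cases "x \<in> S 0"; cases "x \<in> S 1"; cases "x \<in> S 2"; cases "x \<in> S 3"; auto)
qed

definition bitset :: "nat \<Rightarrow> nat \<Rightarrow> nat set" where
  "bitset b j = {c. b \<le> c \<and> c < b + 16 \<and> odd ((c - b) div 2^j)}"

lemma bitset_iff: "j < 4 \<Longrightarrow> b + col S x \<in> bitset b j \<longleftrightarrow> x \<in> S j"
  unfolding bitset_def using col_lt[of S x] col_bit[of j S x] by auto



lemma card_minus_pt:
  assumes "finite l" "p \<in> l"
  shows "card (T \<inter> ((l - {p}) \<inter> Y)) = card (l \<inter> Y \<inter> T) - (if p \<in> Y \<inter> T then 1 else 0)"
proof -
  have "T \<inter> ((l - {p}) \<inter> Y) = (l \<inter> Y \<inter> T) - {p}" by blast
  then show ?thesis using assms by (simp add: card_Diff_singleton_if)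
qed

locale pconf = pplane +
  fixes Z :: 'a and A :: "'a set set" and n :: nat
  assumes Z: "Z \<in> P" and lines: "\<forall>l\<in>L. card l = n+1" and degZ: "card (pencil Z) = n+1"
    and n2: "n \<ge> 2" and Asub: "A \<subseteq> pencil Z" and cardA: "card A = (n+1) div 2"
begin

definition X where "X = P - {Z}"
definition fc :: "(nat \<Rightarrow> 'a set) \<Rightarrow> 'a \<Rightarrow> nat" where
  "fc S x = (if x = Z then 33 else if x \<in> R Z A then 1 + col S x else 17 + col S x)"

lemma fc_range: "fc S x \<in> {1..42}"
  unfolding fc_def using col_lt[of S x] by auto

lemma RB: "R Z (pencil Z - A) = {x\<in>P. x \<noteq> Z \<and> x \<notin> R Z A}"
  using R_compl[OF Z Asub] .

lemma bitset_sub: "bitset b j \<subseteq> {b..<b+16}" unfolding bitset_def by auto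

lemma pre_bitA: assumes "l \<subseteq> P" "j < 4" shows "l \<inter> fc S -` bitset 1 j = l \<inter> R Z A \<inter> S j"
proof (intro set_eqI iffI)
  fix x assume x: "x \<in> l \<inter> fc S -` bitset 1 j"
  then have fx: "fc S x \<in> {1..<17}" using bitset_sub[of 1 j] by auto
  then have "x \<noteq> Z \<and> x \<in> R Z A" unfolding fc_def by (auto split: if_splits)
  then show "x \<in> l \<inter> R Z A \<inter> S j" using x bitset_iff[OF assms(2), of 1 S x] unfolding fc_def by auto
next
  fix x assume x: "x \<in> l \<inter> R Z A \<inter> S j"
  then have "x \<noteq> Z" unfolding R_def by auto
  then show "x \<in> l \<inter> fc S -` bitset 1 j" using x bitset_iff[OF assms(2), of 1 S x] unfolding fc_def by auto
qed

lemma pre_bitB: assumes "l \<subseteq> P" "j < 4" shows "l \<inter> fc S -` bitset 17 j = l \<inter> R Z (pencil Z - A) \<inter> S j"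
proof (intro set_eqI iffI)
  fix x assume x: "x \<in> l \<inter> fc S -` bitset 17 j"
  then have fx: "fc S x \<in> {17..<33}" using bitset_sub[of 17 j] by auto
  then have "x \<noteq> Z \<and> x \<notin> R Z A" using col_lt[of S x] unfolding fc_def by (auto split: if_splits)
  then show "x \<in> l \<inter> R Z (pencil Z - A) \<inter> S j"
    using x bitset_iff[OF assms(2), of 17 S x] assms(1) unfolding fc_def RB by auto
next
  fix x assume x: "x \<in> l \<inter> R Z (pencil Z - A) \<inter> S j"
  then have "x \<noteq> Z" "x \<notin> R Z A" unfolding RB by auto
  then show "x \<in> l \<inter> fc S -` bitset 17 j" using x bitset_iff[OF assms(2), of 17 S x] unfolding fc_def by auto
qed

lemma pre_palA: "l \<inter> fc S -` {1..16} = l \<inter> R Z A"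
proof (intro set_eqI iffI)
  fix x assume x: "x \<in> l \<inter> fc S -` {1..16}"
  then show "x \<in> l \<inter> R Z A" unfolding fc_def by (auto split: if_splits)
next
  fix x assume x: "x \<in> l \<inter> R Z A"
  then have "x \<noteq> Z" unfolding R_def by auto
  then show "x \<in> l \<inter> fc S -` {1..16}" using x col_lt[of S x] unfolding fc_def by auto
qed

lemma pre_palB: "l \<subseteq> P \<Longrightarrow> l \<inter> fc S -` {17..32} = l \<inter> R Z (pencil Z - A)"
proof (intro set_eqI iffI)
  fix x assume l: "l \<subseteq> P" and x: "x \<in> l \<inter> fc S -` {17..32}"
  then show "x \<in> l \<inter> R Z (pencil Z - A)" using col_lt[of S x] unfolding fc_def RB by (auto split: if_splits)
next
  fix x assume x: "x \<in> l \<inter> R Z (pencil Z - A)"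
  then have "x \<noteq> Z" "x \<notin> R Z A" unfolding RB by auto
  then show "x \<in> l \<inter> fc S -` {17..32}" using x col_lt[of S x] unfolding fc_def by auto
qed

lemma pre_Z: "l \<inter> fc S -` {33} = l \<inter> {Z}"
proof (intro set_eqI iffI)
  fix x assume x: "x \<in> l \<inter> fc S -` {33}"
  then show "x \<in> l \<inter> {Z}" using col_lt[of S x] unfolding fc_def by (auto split: if_splits)
qed (auto simp: fc_def)

end

context pconf begin

definition Gd :: "'a set \<Rightarrow> 'a set \<Rightarrow> 'a set \<Rightarrow> 'a set \<Rightarrow> 'a set set" where
  "Gd U V U' V' = {T. T \<subseteq> X \<and> card (T\<inter>U) = card (T\<inter>V) \<and> card (T\<inter>U') = card (T\<inter>V')}"

definition pt :: "'a set \<Rightarrow> 'a set \<Rightarrow> 'a" where "pt l m = (SOME p. p \<in> l \<and> p \<in> m)"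

lemma pt: "l \<in> L \<Longrightarrow> m \<in> L \<Longrightarrow> l \<noteq> m \<Longrightarrow> pt l m \<in> l \<and> pt l m \<in> m"
  unfolding pt_def using meet_ex by (rule someI_ex) 

definition G2 where "G2 l m = Gd ((l - {pt l m}) \<inter> R Z A) ((m - {pt l m}) \<inter> R Z A)
   ((l - {pt l m}) \<inter> R Z (pencil Z - A)) ((m - {pt l m}) \<inter> R Z (pencil Z - A))"
definition G1 where "G1 c c' = Gd (c - {Z}) (c' - {Z}) {} {}"

definition Lno where "Lno = {l \<in> L. Z \<notin> l}"

lemma finpen: "finite (pencil Z)" using finL unfolding pencil_def by auto

lemma cardB: "card (pencil Z - A) = n + 1 - (n+1) div 2"
  using finpen Asub degZ cardA by (simp add: card_Diff_subset finite_subset)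

lemma teq:
  assumes "l \<in> L" "m \<in> L" "line_type 42 (fc S) l = line_type 42 (fc S) m" "C \<subseteq> {1..42}"
  shows "card (l \<inter> fc S -` C) = card (m \<inter> fc S -` C)"
  using type_eq_C[OF finl[OF assms(1)] finl[OF assms(2)] assms(3,4)] .

lemma bitset_sub42: "b \<in> {1, 17} \<Longrightarrow> bitset b j \<subseteq> {1..42}"
  using bitset_sub[of b j] by auto

lemma pencil_minus: "c \<in> pencil Z \<Longrightarrow> card (c - {Z}) = n"
  using lines finl unfolding pencil_def by auto

lemma bad_pencil_same:
  assumes l: "l \<in> pencil Z" and m: "m \<in> pencil Z" and G: "G \<subseteq> pencil Z" and lG: "l \<in> G" and mG: "m \<in> G"
    and b: "b \<in> {1,17}"
    and pre: "\<And>j k. k \<subseteq> P \<Longrightarrow> j < 4 \<Longrightarrow> k \<inter> fc S -` bitset b j = k \<inter> R Z G \<inter> S j"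
    and e: "line_type 42 (fc S) l = line_type 42 (fc S) m" and SX: "\<forall>j<4. S j \<subseteq> X"
  shows "\<forall>j<4. S j \<in> G1 l m"
proof (intro allI impI)
  fix j :: nat assume j: "j < 4"
  have lL: "l \<in> L" "m \<in> L" using l m unfolding pencil_def by auto
  have "card (l \<inter> fc S -` bitset b j) = card (m \<inter> fc S -` bitset b j)"
    using teq[OF lL e bitset_sub42[OF b]] .
  then have "card (l \<inter> R Z G \<inter> S j) = card (m \<inter> R Z G \<inter> S j)"
    using pre[OF sub[OF lL(1)] j] pre[OF sub[OF lL(2)] j] by simp
  moreover have "l \<inter> R Z G = l - {Z}" "m \<inter> R Z G = m - {Z}"
    using pencil_line_R[OF l G] pencil_line_R[OF m G] lG mG by auto
  ultimately have "card (S j \<inter> (l - {Z})) = card (S j \<inter> (m - {Z}))" by (simp add: Int_commute)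
  then show "S j \<in> G1 l m" unfolding G1_def Gd_def using SX j by auto
qed

lemma bad_cases:
  assumes l: "l \<in> L" and m: "m \<in> L" and lm: "l \<noteq> m"
    and e: "line_type 42 (fc S) l = line_type 42 (fc S) m" and SX: "\<forall>j<4. S j \<subseteq> X"
  shows "(l \<in> Lno \<and> m \<in> Lno \<and> (\<forall>j<4. S j \<in> G2 l m)) \<or>
         (l \<in> pencil Z \<and> m \<in> pencil Z \<and> (\<forall>j<4. S j \<in> G1 l m))"
proof -
  have tZ: "card (l \<inter> {Z}) = card (m \<inter> {Z})"
    using teq[OF l m e, of "{33}"] pre_Z[of l S] pre_Z[of m S] by simp
  show ?thesis
  proof (cases "Z \<in> l")
    case True
    then have Zm: "Z \<in> m" using tZ by (cases "Z \<in> m") auto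
    have lp: "l \<in> pencil Z" and mp: "m \<in> pencil Z" using True Zm l m unfolding pencil_def by auto
    have tA: "card (l \<inter> R Z A) = card (m \<inter> R Z A)"
      using teq[OF l m e, of "{1..16}"] pre_palA[of l S] pre_palA[of m S] by simp
    have cl: "card (l \<inter> R Z A) = (if l \<in> A then n else 0)"
      using pencil_line_R[OF lp Asub] pencil_minus[OF lp] by simp
    have cm: "card (m \<inter> R Z A) = (if m \<in> A then n else 0)"
      using pencil_line_R[OF mp Asub] pencil_minus[OF mp] by simp
    have same: "(l \<in> A) = (m \<in> A)" using tA cl cm n2 by (auto split: if_splits)
    show ?thesis
    proof (cases "l \<in> A")
      case True
      have "\<forall>j<4. S j \<in> G1 l m"
        by (rule bad_pencil_same[OF lp mp Asub True _ _ _ e SX, of 1])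
           (use same True pre_bitA in auto)
      then show ?thesis using lp mp by blast
    next
      case False
      have B: "pencil Z - A \<subseteq> pencil Z" by blast
      have "\<forall>j<4. S j \<in> G1 l m"
        by (rule bad_pencil_same[OF lp mp B _ _ _ _ e SX, of 17])
           (use same False lp mp pre_bitB in auto)
      then show ?thesis using lp mp by blast
    qed
  next
    case False
    then have Zm: "Z \<notin> m" using tZ by (cases "Z \<in> m") auto
    have lno: "l \<in> Lno" "m \<in> Lno" using False Zm l m unfolding Lno_def by auto
    define p where "p = pt l m"
    have p: "p \<in> l" "p \<in> m" using pt[OF l m lm] unfolding p_def by auto
    have key: "card (S j \<inter> ((l - {p}) \<inter> R Z G)) = card (S j \<inter> ((m - {p}) \<inter> R Z G))"
      if j: "j < 4" and b: "b \<in> {1,17}"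
        and pre: "\<And>k. k \<subseteq> P \<Longrightarrow> k \<inter> fc S -` bitset b j = k \<inter> R Z G \<inter> S j" for j b G
    proof -
      have "card (l \<inter> fc S -` bitset b j) = card (m \<inter> fc S -` bitset b j)"
        using teq[OF l m e bitset_sub42[OF b]] .
      then have "card (l \<inter> R Z G \<inter> S j) = card (m \<inter> R Z G \<inter> S j)"
        using pre[OF sub[OF l]] pre[OF sub[OF m]] by simp
      then show ?thesis
        using card_minus_pt[OF finl[OF l] p(1), of "S j" "R Z G"] card_minus_pt[OF finl[OF m] p(2), of "S j" "R Z G"]
        by simp
    qed
    have "\<forall>j<4. S j \<in> G2 l m"
    proof (intro allI impI)
      fix j :: nat assume j: "j < 4"
      have "card (S j \<inter> ((l - {p}) \<inter> R Z A)) = card (S j \<inter> ((m - {p}) \<inter> R Z A))"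
        by (rule key[OF j, of 1]) (use pre_bitA j in auto)
      moreover have "card (S j \<inter> ((l - {p}) \<inter> R Z (pencil Z - A))) = card (S j \<inter> ((m - {p}) \<inter> R Z (pencil Z - A)))"
        by (rule key[OF j, of 17]) (use pre_bitB j in auto)
      ultimately show "S j \<in> G2 l m" unfolding G2_def Gd_def p_def[symmetric] using SX j by auto
    qed
    then show ?thesis using lno by blast
  qed
qed

end

context pconf begin

lemma finX: "finite X" unfolding X_def using finP by auto

lemma card_G1:
  assumes c: "c \<in> pencil Z" and c': "c' \<in> pencil Z" and cc: "c \<noteq> c'"
  shows "card (G1 c c') ^ 4 * (3*(n+1)^2) \<le> (2 ^ card X) ^ 4"
proof -
  have U: "c - {Z} \<subseteq> X" "c' - {Z} \<subseteq> X" using c c' sub unfolding X_def pencil_def by auto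
  have d: "(c - {Z}) \<inter> (c' - {Z}) = {}" using pencil_uniq[OF c c'] cc by blast
  have cn: "card (c - {Z}) = n" "card (c' - {Z}) = n" using pencil_minus c c' by auto
  have "card (G1 c c') \<le> ((2*n) choose n) * ((2*0) choose 0) * 2^(card X - 2*n - 2*0)"
    unfolding G1_def Gd_def
    by (rule good_count[OF finX U(1) U(2) _ _ d _ _ _ _ _ cn]) auto
  then have "card (G1 c c') ^ 4 \<le> (((2*n) choose n) * ((2*0) choose 0) * 2^(card X - 2*n - 2*0)) ^ 4"
    by (rule power_mono) simp
  moreover have "2*n \<le> card X"
  proof -
    have f: "finite (c - {Z})" "finite (c' - {Z})" using U finX finite_subset by blast+
    have "card ((c - {Z}) \<union> (c' - {Z})) = card (c - {Z}) + card (c' - {Z})"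
      by (rule card_Un_disjoint[OF f d])
    then have "card ((c - {Z}) \<union> (c' - {Z})) = 2*n" using cn by simp
    moreover have "card ((c - {Z}) \<union> (c' - {Z})) \<le> card X" using U finX by (intro card_mono) auto
    ultimately show ?thesis by simp
  qed
  ultimately show ?thesis using num1[of n "card X"] n2
    by (meson le_trans mult_le_mono1 le_numeral_extra(2) one_le_numeral order.trans)
qed

lemma card_G2:
  assumes l: "l \<in> Lno" and m: "m \<in> Lno" and lm: "l \<noteq> m"
  shows "card (G2 l m) ^ 4 * (2*n^4) \<le> (2 ^ card X) ^ 4"
proof -
  have lL: "l \<in> L" "Z \<notin> l" and mL: "m \<in> L" "Z \<notin> m" using l m unfolding Lno_def by auto
  define p where "p = pt l m"
  have p: "p \<in> l" "p \<in> m" using pt[OF lL(1) mL(1) lm] unfolding p_def by auto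
  have pP: "p \<in> P" "p \<noteq> Z" using p sub lL by auto
  define RA where "RA = R Z A"
  define RB where "RB = R Z (pencil Z - A)"
  define a where "a = (n+1) div 2"
  have Bsub: "pencil Z - A \<subseteq> pencil Z" by blast
  have RAB: "RA \<inter> RB = {}" "p \<in> RA \<or> p \<in> RB" unfolding RA_def RB_def RB using pP by auto
  have clA: "card (k \<inter> RA) = a" if "k \<in> L" "Z \<notin> k" for k
    using card_line_R[OF Z that Asub] cardA unfolding RA_def a_def by simp
  have clB: "card (k \<inter> RB) = n + 1 - a" if "k \<in> L" "Z \<notin> k" for k
    using card_line_R[OF Z that Bsub] cardB unfolding RB_def a_def by simp
  have cm: "card ((k - {p}) \<inter> Y) = card (k \<inter> Y) - (if p \<in> Y then 1 else 0)" if "k \<in> L" "p \<in> k" for k Y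
  proof -
    have "(k - {p}) \<inter> Y = (k \<inter> Y) - {p}" by blast
    then show ?thesis using finl[OF that(1)] that(2) by (simp add: card_Diff_singleton_if)
  qed
  define k1 where "k1 = card ((l - {p}) \<inter> RA)"
  define k2 where "k2 = card ((l - {p}) \<inter> RB)"
  have k1m: "card ((m - {p}) \<inter> RA) = k1" unfolding k1_def using cm[OF lL(1) p(1)] cm[OF mL(1) p(2)] clA[OF lL] clA[OF mL] by simp
  have k2m: "card ((m - {p}) \<inter> RB) = k2" unfolding k2_def using cm[OF lL(1) p(1)] cm[OF mL(1) p(2)] clB[OF lL] clB[OF mL] by simp
  have kk: "(k1 = (n+1) div 2 - 1 \<and> k2 = n+1 - (n+1) div 2) \<or> (k1 = (n+1) div 2 \<and> k2 = n - (n+1) div 2)"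
  proof (cases "p \<in> RA")
    case True
    then have "p \<notin> RB" using RAB by blast
    then show ?thesis using True unfolding k1_def k2_def a_def[symmetric]
      using cm[OF lL(1) p(1)] clA[OF lL] clB[OF lL] by simp
  next
    case False
    then have "p \<in> RB" using RAB by blast
    then show ?thesis using False unfolding k1_def k2_def a_def[symmetric]
      using cm[OF lL(1) p(1)] clA[OF lL] clB[OF lL] by simp
  qed
  have lmd: "(l - {p}) \<inter> (m - {p}) = {}" using meet_uniq[OF lL(1) mL(1) lm] p by blast
  have XX: "(l - {p}) \<inter> RA \<subseteq> X" "(m - {p}) \<inter> RA \<subseteq> X" "(l - {p}) \<inter> RB \<subseteq> X" "(m - {p}) \<inter> RB \<subseteq> X"
    using R_sub unfolding X_def RA_def RB_def by blast+
  have "card (G2 l m) \<le> ((2*k1) choose k1) * ((2*k2) choose k2) * 2^(card X - 2*k1 - 2*k2)"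
    unfolding G2_def Gd_def p_def[symmetric] RA_def[symmetric] RB_def[symmetric]
    by (rule good_count[OF finX XX]) (use lmd RAB(1) k1m k2m in \<open>auto simp: k1_def k2_def\<close>)
  then have "card (G2 l m) ^ 4 \<le> (((2*k1) choose k1) * ((2*k2) choose k2) * 2^(card X - 2*k1 - 2*k2)) ^ 4"
    by (rule power_mono) simp
  moreover have "2*k1 + 2*k2 \<le> card X"
  proof -
    have s: "k1 + k2 = n" using num_k[OF n2 kk] by simp
    have U: "l - {p} \<subseteq> X" "m - {p} \<subseteq> X" using lL mL sub unfolding X_def by auto
    have f: "finite (l - {p})" "finite (m - {p})" using U finX finite_subset by blast+
    have "card ((l - {p}) \<union> (m - {p})) = card (l - {p}) + card (m - {p})"
      by (rule card_Un_disjoint[OF f lmd])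
    also have "\<dots> = 2*n" using lines lL mL p by simp
    finally have "card ((l - {p}) \<union> (m - {p})) = 2*n" .
    moreover have "card ((l - {p}) \<union> (m - {p})) \<le> card X" using U finX by (intro card_mono) auto
    ultimately show ?thesis using s by simp
  qed
  ultimately show ?thesis using num2[OF n2 kk] by (meson le_trans mult_le_mono1)
qed

end

context pconf begin

lemma card_Lno: "card Lno \<le> n^2"
proof -
  have "2 \<le> card (pencil Z)" using degZ n2 by simp
  then obtain T where T: "T \<subseteq> pencil Z" "card T = 2" by (meson obtain_subset_with_card_n)
  then obtain c1 c2 where c: "T = {c1, c2}" "c1 \<noteq> c2" by (meson card_2_iff)
  have c1: "c1 \<in> pencil Z" and c2: "c2 \<in> pencil Z" using T c by auto
  have cL: "c1 \<in> L" "Z \<in> c1" "c2 \<in> L" "Z \<in> c2" using c1 c2 unfolding pencil_def by auto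
  define h where "h m = (pt m c1, pt m c2)" for m
  have ptm: "pt m c \<in> m \<and> pt m c \<in> c \<and> pt m c \<noteq> Z" if "m \<in> Lno" "c \<in> {c1,c2}" for m c
  proof -
    have "m \<in> L" "Z \<notin> m" using that unfolding Lno_def by auto
    moreover have "c \<in> L" "Z \<in> c" using that(2) cL by auto
    ultimately show ?thesis using pt[of m c] by auto
  qed
  have "inj_on h Lno"
  proof (rule inj_onI)
    fix m m' assume m: "m \<in> Lno" and m': "m' \<in> Lno" and e: "h m = h m'"
    have e1: "pt m c1 = pt m' c1" and e2: "pt m c2 = pt m' c2" using e unfolding h_def by auto
    have ne: "pt m c1 \<noteq> pt m c2"
    proof
      assume "pt m c1 = pt m c2"
      then have "c1 = c2" using pencil_uniq[OF c1 c2, of "pt m c1"] ptm[OF m, of c1] ptm[OF m, of c2] by auto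
      then show False using c by simp
    qed
    have "m \<in> L" "m' \<in> L" using m m' unfolding Lno_def by auto
    then show "m = m'" using join_uniq[of m m' "pt m c1" "pt m c2"] ne ptm[OF m, of c1] ptm[OF m, of c2]
        ptm[OF m', of c1] ptm[OF m', of c2] e1 e2 by auto
  qed
  moreover have "h ` Lno \<subseteq> (c1 - {Z}) \<times> (c2 - {Z})" using ptm unfolding h_def by auto
  moreover have "finite ((c1 - {Z}) \<times> (c2 - {Z}))" using finl cL by auto
  ultimately have "card Lno \<le> card ((c1 - {Z}) \<times> (c2 - {Z}))" by (meson card_inj_on_le)
  also have "\<dots> = n * n" using pencil_minus[OF c1] pencil_minus[OF c2] by (simp add: card_cartesian_product)
  finally show ?thesis by (simp add: power2_eq_square)
qed

definition \<Omega> where "\<Omega> = (\<Pi>\<^sub>E j\<in>{0..<4::nat}. Pow X)"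

lemma card_PiE_const: "finite G \<Longrightarrow> card (\<Pi>\<^sub>E j\<in>{0..<4::nat}. G) = card G ^ 4"
  by (simp add: card_PiE)

lemma sum_bound:
  assumes "finite I" "\<And>i. i \<in> I \<Longrightarrow> g i * K \<le> (T::nat)" "card I \<le> N"
  shows "(\<Sum>i\<in>I. g i) * K \<le> N * T"
proof -
  have "(\<Sum>i\<in>I. g i) * K = (\<Sum>i\<in>I. g i * K)" by (simp add: sum_distrib_right)
  also have "\<dots> \<le> (\<Sum>i\<in>I. T)" using assms(2) by (rule sum_mono)
  also have "\<dots> = card I * T" by simp
  also have "\<dots> \<le> N * T" using assms(3) by simp
  finally show ?thesis .
qed

lemma exists_good: "\<exists>S\<in>\<Omega>. \<forall>l\<in>L. \<forall>m\<in>L. l \<noteq> m \<longrightarrow> line_type 42 (fc S) l \<noteq> line_type 42 (fc S) m"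
proof (rule ccontr)
  assume "\<not> ?thesis"
  then have allbad: "\<forall>S\<in>\<Omega>. \<exists>l\<in>L. \<exists>m\<in>L. l \<noteq> m \<and> line_type 42 (fc S) l = line_type 42 (fc S) m" by blast
  define I2 where "I2 = {(l,m). l \<in> Lno \<and> m \<in> Lno \<and> l \<noteq> m}"
  define I1 where "I1 = {(c,c'). c \<in> pencil Z \<and> c' \<in> pencil Z \<and> c \<noteq> c'}"
  define F2 where "F2 i = (\<Pi>\<^sub>E j\<in>{0..<4::nat}. G2 (fst i) (snd i))" for i
  define F1 where "F1 i = (\<Pi>\<^sub>E j\<in>{0..<4::nat}. G1 (fst i) (snd i))" for i
  define T where "T = ((2::nat) ^ card X) ^ 4"
  have finLno: "finite Lno" unfolding Lno_def using finL by auto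
  have fI2: "finite I2" unfolding I2_def by (rule finite_subset[of _ "Lno \<times> Lno"]) (use finLno in auto)
  have fI1: "finite I1" unfolding I1_def by (rule finite_subset[of _ "pencil Z \<times> pencil Z"]) (use finpen in auto)
  have fG: "finite (Gd U V U' V')" for U V U' V' unfolding Gd_def using finX by (auto intro: finite_subset[of _ "Pow X"])
  have sub: "\<Omega> \<subseteq> (\<Union>i\<in>I2. F2 i) \<union> (\<Union>i\<in>I1. F1 i)"
  proof
    fix S assume S: "S \<in> \<Omega>"
    then obtain l m where lm: "l \<in> L" "m \<in> L" "l \<noteq> m" "line_type 42 (fc S) l = line_type 42 (fc S) m"
      using allbad by blast
    have SX: "\<forall>j<4. S j \<subseteq> X" using S unfolding \<Omega>_def by auto
    have ext: "S \<in> extensional {0..<4}" using S unfolding \<Omega>_def by (simp add: PiE_iff)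
    from bad_cases[OF lm SX] show "S \<in> (\<Union>i\<in>I2. F2 i) \<union> (\<Union>i\<in>I1. F1 i)"
    proof
      assume h: "l \<in> Lno \<and> m \<in> Lno \<and> (\<forall>j<4. S j \<in> G2 l m)"
      then have "S \<in> F2 (l,m)" unfolding F2_def using ext by (auto simp: PiE_iff)
      moreover have "(l,m) \<in> I2" using h lm unfolding I2_def by auto
      ultimately show ?thesis by blast
    next
      assume h: "l \<in> pencil Z \<and> m \<in> pencil Z \<and> (\<forall>j<4. S j \<in> G1 l m)"
      then have "S \<in> F1 (l,m)" unfolding F1_def using ext by (auto simp: PiE_iff)
      moreover have "(l,m) \<in> I1" using h lm unfolding I1_def by auto
      ultimately show ?thesis by blast
    qed
  qed
  have cO: "card \<Omega> = T" unfolding \<Omega>_def T_def using finX by (simp add: card_PiE card_Pow)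
  have "card \<Omega> \<le> card ((\<Union>i\<in>I2. F2 i) \<union> (\<Union>i\<in>I1. F1 i))"
    using sub fI1 fI2 fG by (intro card_mono) (auto simp: F1_def F2_def G1_def G2_def intro!: finite_PiE)
  also have "\<dots> \<le> card (\<Union>i\<in>I2. F2 i) + card (\<Union>i\<in>I1. F1 i)" by (rule card_Un_le)
  also have "\<dots> \<le> (\<Sum>i\<in>I2. card (F2 i)) + (\<Sum>i\<in>I1. card (F1 i))"
    by (intro add_mono card_UN_le fI1 fI2)
  finally have tot: "T \<le> (\<Sum>i\<in>I2. card (F2 i)) + (\<Sum>i\<in>I1. card (F1 i))" using cO by simp
  have s2: "(\<Sum>i\<in>I2. card (F2 i)) * (2*n^4) \<le> n^4 * T"
  proof (rule sum_bound[OF fI2])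
    fix i assume i: "i \<in> I2"
    then obtain l m where i: "i = (l,m)" "l \<in> Lno" "m \<in> Lno" "l \<noteq> m" unfolding I2_def by auto
    have "finite (G2 l m)" unfolding G2_def by (rule fG)
    then have "card (F2 i) = card (G2 l m) ^ 4" unfolding F2_def i by (simp add: card_PiE_const)
    then show "card (F2 i) * (2*n^4) \<le> T" unfolding T_def using card_G2[OF i(2-4)] by simp
  next
    have "card I2 \<le> card (Lno \<times> Lno)" unfolding I2_def by (rule card_mono) (use finLno in auto)
    also have "\<dots> = card Lno ^ 2" by (simp add: card_cartesian_product power2_eq_square)
    also have "\<dots> \<le> (n^2)^2" using card_Lno by (rule power_mono) simp
    finally show "card I2 \<le> n^4" by simp
  qed
  have s1: "(\<Sum>i\<in>I1. card (F1 i)) * (3*(n+1)^2) \<le> (n+1)^2 * T"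
  proof (rule sum_bound[OF fI1])
    fix i assume i: "i \<in> I1"
    then obtain l m where i: "i = (l,m)" "l \<in> pencil Z" "m \<in> pencil Z" "l \<noteq> m" unfolding I1_def by auto
    have "finite (G1 l m)" unfolding G1_def by (rule fG)
    then have "card (F1 i) = card (G1 l m) ^ 4" unfolding F1_def i by (simp add: card_PiE_const)
    then show "card (F1 i) * (3*(n+1)^2) \<le> T" unfolding T_def using card_G1[OF i(2-4)] by simp
  next
    have "card I1 \<le> card (pencil Z \<times> pencil Z)" unfolding I1_def by (rule card_mono) (use finpen in auto)
    also have "\<dots> = (n+1)^2" using degZ by (simp add: card_cartesian_product power2_eq_square)
    finally show "card I1 \<le> (n+1)^2" .
  qed
  have np: "n^4 > 0" "(n+1)^2 > 0" using n2 by auto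
  have a2: "2 * (\<Sum>i\<in>I2. card (F2 i)) \<le> T" using s2 np(1) by (simp add: algebra_simps)
  have a1: "3 * (\<Sum>i\<in>I1. card (F1 i)) \<le> T" using s1 np(2) by (simp add: algebra_simps)
  have "T > 0" unfolding T_def by simp
  then show False using tot a1 a2 by linarith
qed

end


theorem mainTheorem8:
  fixes P :: "'a set" and L :: "'a set set"
  assumes "finite P" and "projective_plane P L" and "pp_order L \<ge> 2"
  shows "\<exists>f. legitimate_coloring P L 42 f"
proof -
  interpret pplane P L using assms(1,2) by unfold_locales
  obtain Z0 where Z0: "Z0 \<in> P" "\<forall>l\<in>L. card l = card (pencil Z0)" "L \<noteq> {}" by (rule all_same)
  define n where "n = card (pencil Z0) - 1"
  have "(SOME l. l \<in> L) \<in> L" using Z0(3) by (simp add: some_in_eq)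
  then have po: "pp_order L = n" unfolding pp_order_def n_def using Z0(2) by simp
  then have n2: "n \<ge> 2" using assms(3) by simp
  then have dz: "card (pencil Z0) = n + 1" unfolding n_def by simp
  have "(n+1) div 2 \<le> card (pencil Z0)" using dz by simp
  then obtain A where A: "A \<subseteq> pencil Z0" "card A = (n+1) div 2" by (meson obtain_subset_with_card_n)
  interpret pconf P L Z0 A n
    by unfold_locales (use Z0 dz n2 A in auto)
  obtain S where S: "\<forall>l\<in>L. \<forall>m\<in>L. l \<noteq> m \<longrightarrow> line_type 42 (fc S) l \<noteq> line_type 42 (fc S) m"
    using exists_good by blast
  have "legitimate_coloring P L 42 (fc S)"
    unfolding legitimate_coloring_def
  proof
    show "\<forall>p\<in>P. fc S p \<in> {1..42}" using fc_range by blast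
    show "inj_on (line_type 42 (fc S)) L" using S by (meson inj_onI)
  qed
  then show ?thesis by blast
qed


end
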